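(* Let $S$ be a $\phi$-calibrated surrogate with potential $h:\mathcal{D}\to\mathbb{R}$ and calibration function $\zeta_h$. Suppose $h$ is $(1/\beta)$-strongly convex on $\mathcal{D}$ with respect to a norm $\|\cdot\|$ on $\mathcal{H}$, i.e. $h(u)\ge h(v)+\langle u-v,\nabla h(v)\rangle+\frac{1}{2\beta}\|u-v\|^2$ for all $u,v\in\mathcal{D}$. Then for all $\varepsilon\ge0$, $$\zeta_h(\varepsilon)\ge\frac{\varepsilon^2}{8\,c_{\psi,\|\cdot\|_*}^2\,\beta},\qquad c_{\psi,\|\cdot\|_*}=\max_{z\in\mathcal{Z}}\|\psi(z)\|_*,$$ where $\|\cdot\|_*$ is the dual norm of $\|\cdot\|$.
   Context: Let $\mathcal{Y},\mathcal{Z}$ be finite nonempty sets, $\mathcal{H}$ a finite-dimensional real Euclidean space, $\psi:\mathcal{Z}\to\mathcal{H}$, $\phi:\mathcal{Y}\to\mathcal{H}$, $c\in\mathbb{R}$, and $L(z,y)=\langle\psi(z),\phi(y)\rangle+c$. For $q\in\operatorname{Prob}(\mathcal{Y})$, $\mu(q)=\sum_y q(y)\phi(y)$; $\mathcal{M}=\operatorname{hull}(\phi(\mathcal{Y}))$. $\ell(z,q)=\mathbb{E}_{Y\sim q}L(z,Y)$, $\delta\ell(z,q)=\ell(z,q)-\min_{z'}\ell(z',q)$. $z(u)$ denotes an element of $\arg\min_{z}\langle\psi(z),u\rangle$ chosen by a fixed tie-breaking rule. For $S:\mathcal{V}\times\mathcal{Y}\to\mathbb{R}$, $s(v,q)=\mathbb{E}_{Y\sim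 q}S(v,Y)$, $\delta s(v,q)=s(v,q)-\inf_{v'}s(v',q)$. $D_h(u',u)=h(u')-h(u)-\langle u'-u,\nabla h(u)\rangle$. $S$ is $\phi$-calibrated with potential $h$ if there exist a convex $\mathcal{D}\supseteq\mathcal{M}$, strictly convex differentiable $h:\mathcal{D}\to\mathbb{R}$ and a continuous bijection $t:\mathcal{D}\to\mathcal{V}$ with $\delta s(v,q)=D_h(\mu(q),t^{-1}(v))$ for all $v,q$. Decoding $d(v)=z(t^{-1}(v))$. Calibration function $\zeta_h(\varepsilon)=\inf\{\delta s(v,q):\delta\ell(d(v),q)\ge\varepsilon\}$ ($\inf\emptyset=+\infty$). *)

theory Defs
  imports "HOL-Analysis.Analysis"
begin

definition Prob :: "('y::finite \<Rightarrow> real) set" where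
  "Prob = {q. (\<forall>y. 0 \<le> q y) \<and> (\<Sum>y\<in>UNIV. q y) = 1}"

definition mean_emb :: "('y::finite \<Rightarrow> 'h::real_vector) \<Rightarrow> ('y \<Rightarrow> real) \<Rightarrow> 'h" where
  "mean_emb \<phi> q = (\<Sum>y\<in>UNIV. q y *\<^sub>R \<phi> y)"

definition lossL :: "('z \<Rightarrow> 'h::real_inner) \<Rightarrow> ('y \<Rightarrow> 'h) \<Rightarrow> real \<Rightarrow> 'z \<Rightarrow> 'y \<Rightarrow> real" where
  "lossL \<psi> \<phi> c z y = inner (\<psi> z) (\<phi> y) + c"

definition exp_loss :: "('z \<Rightarrow> 'h::real_inner) \<Rightarrow> ('y::finite \<Rightarrow> 'h) \<Rightarrow> real \<Rightarrow> 'z \<Rightarrow> ('y \<Rightarrow> real) \<Rightarrow> real" where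
  "exp_loss \<psi> \<phi> c z q = (\<Sum>y\<in>UNIV. q y * lossL \<psi> \<phi> c z y)"

definition regret_loss :: "('z::finite \<Rightarrow> 'h::real_inner) \<Rightarrow> ('y::finite \<Rightarrow> 'h) \<Rightarrow> real \<Rightarrow> 'z \<Rightarrow> ('y \<Rightarrow> real) \<Rightarrow> real" where
  "regret_loss \<psi> \<phi> c z q = exp_loss \<psi> \<phi> c z q - (MIN z'. exp_loss \<psi> \<phi> c z' q)"

definition is_argmin_selector :: "('z \<Rightarrow> 'h::real_inner) \<Rightarrow> ('h \<Rightarrow> 'z) \<Rightarrow> bool" where
  "is_argmin_selector \<psi> zsel \<longleftrightarrow> (\<forall>u z'. inner (\<psi> (zsel u)) u \<le> inner (\<psi> z') u)"

definition exp_surr :: "('v \<Rightarrow> 'y::finite \<Rightarrow> real) \<Rightarrow> 'v \<Rightarrow> ('y \<Rightarrow> real) \<Rightarrow> real" where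
  "exp_surr S v q = (\<Sum>y\<in>UNIV. q y * S v y)"

definition regret_surr :: "'v set \<Rightarrow> ('v \<Rightarrow> 'y::finite \<Rightarrow> real) \<Rightarrow> 'v \<Rightarrow> ('y \<Rightarrow> real) \<Rightarrow> real" where
  "regret_surr V S v q = exp_surr S v q - (INF v'\<in>V. exp_surr S v' q)"

definition bregman :: "('h::real_inner \<Rightarrow> real) \<Rightarrow> ('h \<Rightarrow> 'h) \<Rightarrow> 'h \<Rightarrow> 'h \<Rightarrow> real" where
  "bregman h gradh u' u = h u' - h u - inner (u' - u) (gradh u)"

definition strictly_convex_on :: "'a::real_vector set \<Rightarrow> ('a \<Rightarrow> real) \<Rightarrow> bool" where
  "strictly_convex_on A f \<longleftrightarrow> (\<forall>x\<in>A. \<forall>y\<in>A. \<forall>t. x \<noteq> y \<and> 0 < t \<and> t < 1 \<longrightarrow>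
      f ((1 - t) *\<^sub>R x + t *\<^sub>R y) < (1 - t) * f x + t * f y)"

definition phi_calibrated :: "('y::finite \<Rightarrow> 'h::euclidean_space) \<Rightarrow> 'v::topological_space set \<Rightarrow> ('v \<Rightarrow> 'y \<Rightarrow> real)
     \<Rightarrow> 'h set \<Rightarrow> ('h \<Rightarrow> real) \<Rightarrow> ('h \<Rightarrow> 'h) \<Rightarrow> ('h \<Rightarrow> 'v) \<Rightarrow> bool" where
  "phi_calibrated \<phi> V S D h gradh t \<longleftrightarrow>
     convex D \<and> convex hull (range \<phi>) \<subseteq> D \<and>
     strictly_convex_on D h \<and>
     (\<forall>u\<in>D. (h has_derivative (\<lambda>x. inner (gradh u) x)) (at u within D)) \<and>
     continuous_on D t \<and> bij_betw t D V \<and>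
     (\<forall>v\<in>V. \<forall>q\<in>Prob. regret_surr V S v q = bregman h gradh (mean_emb \<phi> q) (inv_into D t v))"

definition decode :: "('h \<Rightarrow> 'z) \<Rightarrow> 'h set \<Rightarrow> ('h \<Rightarrow> 'v) \<Rightarrow> 'v \<Rightarrow> 'z" where
  "decode zsel D t v = zsel (inv_into D t v)"

(* calibration function, with Inf {} = +infinity *)
definition calib_fun :: "('z::finite \<Rightarrow> 'h::real_inner) \<Rightarrow> ('y::finite \<Rightarrow> 'h) \<Rightarrow> real \<Rightarrow> ('h \<Rightarrow> 'z)
     \<Rightarrow> 'v set \<Rightarrow> ('v \<Rightarrow> 'y \<Rightarrow> real) \<Rightarrow> 'h set \<Rightarrow> ('h \<Rightarrow> 'v) \<Rightarrow> real \<Rightarrow> ereal" where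
  "calib_fun \<psi> \<phi> c zsel V S D t \<epsilon> =
     Inf {ereal (regret_surr V S v q) | v q. v \<in> V \<and> q \<in> Prob \<and>
            regret_loss \<psi> \<phi> c (decode zsel D t v) q \<ge> \<epsilon>}"

definition is_norm :: "('a::real_vector \<Rightarrow> real) \<Rightarrow> bool" where
  "is_norm N \<longleftrightarrow> (\<forall>x y. N (x + y) \<le> N x + N y) \<and> (\<forall>a x. N (a *\<^sub>R x) = \<bar>a\<bar> * N x)
                  \<and> (\<forall>x. N x = 0 \<longleftrightarrow> x = 0)"

definition dual_norm :: "('a::real_inner \<Rightarrow> real) \<Rightarrow> 'a \<Rightarrow> real" where
  "dual_norm N w = (SUP x\<in>{x. N x \<le> 1}. inner w x)"

end

theory Submission
  imports Defs
begin

lemma isn_0: "is_norm N \<Longrightarrow> N 0 = 0"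
  unfolding is_norm_def by auto

lemma isn_nonneg: "is_norm N \<Longrightarrow> N x \<ge> 0"
proof -
  assume a: "is_norm N"
  have "N (x + (-x)) \<le> N x + N (-x)" using a unfolding is_norm_def by blast
  moreover have "N (-x) = N x" using a unfolding is_norm_def
    by (metis abs_minus_cancel abs_one mult_1 scaleR_minus1_left)
  ultimately show ?thesis using isn_0[OF a] by simp
qed

lemma isn_minus: "is_norm N \<Longrightarrow> N (-x) = N x"
  unfolding is_norm_def by (metis abs_minus_cancel abs_one mult_1 scaleR_minus1_left)

lemma isn_sum: assumes "is_norm N" "finite A" shows "N (sum f A) \<le> (\<Sum>i\<in>A. N (f i))"
  using assms(2)
proof (induction A rule: finite_induct)
  case empty then show ?case using isn_0[OF assms(1)] by simp
next
  case (insert x F)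
  have "N (f x + sum f F) \<le> N (f x) + N (sum f F)" using assms(1) unfolding is_norm_def by blast
  then show ?case using insert by simp
qed

lemma isn_upper:
  fixes N :: "'h::euclidean_space \<Rightarrow> real"
  assumes "is_norm N"
  shows "\<exists>M\<ge>0. \<forall>x. N x \<le> M * norm x"
proof (intro exI[of _ "\<Sum>i\<in>Basis. N i"] conjI allI)
  show "0 \<le> (\<Sum>i\<in>Basis. N i)" using isn_nonneg[OF assms] by (simp add: sum_nonneg)
  fix x :: 'h
  have "N x = N (\<Sum>i\<in>Basis. (x \<bullet> i) *\<^sub>R i)" by (simp add: euclidean_representation)
  also have "\<dots> \<le> (\<Sum>i\<in>Basis. N ((x \<bullet> i) *\<^sub>R i))" by (rule isn_sum[OF assms]) simp
  also have "\<dots> = (\<Sum>i\<in>Basis. \<bar>x \<bullet> i\<bar> * N i)" using assms unfolding is_norm_def by simp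
  also have "\<dots> \<le> (\<Sum>i\<in>Basis. norm x * N i)"
    by (rule sum_mono) (simp add: Basis_le_norm isn_nonneg[OF assms] mult_right_mono)
  also have "\<dots> = (\<Sum>i\<in>Basis. N i) * norm x" by (simp add: sum_distrib_left mult.commute)
  finally show "N x \<le> (\<Sum>i\<in>Basis. N i) * norm x" .
qed

lemma isn_cont:
  fixes N :: "'h::euclidean_space \<Rightarrow> real"
  assumes "is_norm N"
  shows "continuous_on UNIV N"
proof -
  obtain M where M: "M \<ge> 0" "\<And>x. N x \<le> M * norm x" using isn_upper[OF assms] by blast
  have tri: "\<And>x y. N x \<le> N y + N (x - y)" using assms unfolding is_norm_def
    by (metis add.commute diff_add_cancel)
  have L: "\<And>x y. \<bar>N x - N y\<bar> \<le> M * norm (x - y)"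
  proof -
    fix x y :: 'h
    have "N x - N y \<le> M * norm (x - y)" using tri[of x y] M(2)[of "x - y"] by linarith
    moreover have "N y - N x \<le> M * norm (x - y)" using tri[of y x] M(2)[of "y - x"]
      by (simp add: norm_minus_commute)
    ultimately show "\<bar>N x - N y\<bar> \<le> M * norm (x - y)" by linarith
  qed
  show ?thesis unfolding continuous_on_iff
  proof (intro ballI allI impI)
    fix x :: 'h and e :: real assume e: "e > 0"
    show "\<exists>d>0. \<forall>x'\<in>UNIV. dist x' x < d \<longrightarrow> dist (N x') (N x) < e"
    proof (intro exI[of _ "e / (M + 1)"] conjI ballI impI)
      show "e / (M + 1) > 0" using e M by simp
      fix x' assume "dist x' x < e / (M + 1)"
      hence "norm (x' - x) * (M + 1) < e" using M by (simp add: dist_norm field_simps)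
      moreover have "M * norm (x' - x) \<le> norm (x' - x) * (M + 1)" by (simp add: algebra_simps)
      ultimately show "dist (N x') (N x) < e" using L[of x' x] by (simp add: dist_real_def)
    qed
  qed
qed

lemma isn_lower:
  fixes N :: "'h::euclidean_space \<Rightarrow> real"
  assumes "is_norm N"
  shows "\<exists>m>0. \<forall>x. m * norm x \<le> N x"
proof -
  obtain b :: 'h where b: "b \<in> Basis" using nonempty_Basis by blast
  have ne: "sphere (0::'h) 1 \<noteq> {}" using b by (auto simp: norm_Basis)
  obtain x0 where x0: "x0 \<in> sphere (0::'h) 1" "\<And>y. y \<in> sphere 0 1 \<Longrightarrow> N x0 \<le> N y"
    using continuous_attains_inf[OF compact_sphere ne continuous_on_subset[OF isn_cont[OF assms]]] by blast
  have "x0 \<noteq> 0" using x0(1) by auto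
  hence pos: "N x0 > 0" using isn_nonneg[OF assms, of x0] assms unfolding is_norm_def by force
  show ?thesis
  proof (intro exI[of _ "N x0"] conjI allI pos)
    fix x :: 'h
    show "N x0 * norm x \<le> N x"
    proof (cases "x = 0")
      case True then show ?thesis using isn_0[OF assms] by simp
    next
      case False
      have "(1 / norm x) *\<^sub>R x \<in> sphere 0 1" using False by simp
      hence "N x0 \<le> N ((1 / norm x) *\<^sub>R x)" using x0(2) by blast
      also have "\<dots> = N x / norm x" using assms False unfolding is_norm_def by simp
      finally show ?thesis using False by (simp add: field_simps)
    qed
  qed
qed

lemma dual_ineq:
  fixes N :: "'h::euclidean_space \<Rightarrow> real"
  assumes "is_norm N"
  shows "inner w x \<le> dual_norm N w * N x" and "dual_norm N w \<ge> 0"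
proof -
  obtain m where m: "m > 0" "\<And>x. m * norm x \<le> N x" using isn_lower[OF assms] by blast
  have bdd: "bdd_above ((\<lambda>x. inner w x) ` {x. N x \<le> 1})"
  proof (rule bdd_aboveI2)
    fix x assume "x \<in> {x. N x \<le> 1}"
    hence "m * norm x \<le> 1" using m(2)[of x] by simp
    hence "norm x \<le> 1 / m" using m(1) by (simp add: field_simps)
    hence "norm w * norm x \<le> norm w * (1 / m)" by (rule mult_left_mono) simp
    thus "inner w x \<le> norm w * (1 / m)" using norm_cauchy_schwarz[of w x] by linarith
  qed
  have le: "\<And>y. N y \<le> 1 \<Longrightarrow> inner w y \<le> dual_norm N w"
    unfolding dual_norm_def by (rule cSUP_upper[OF _ bdd]) simp
  show "dual_norm N w \<ge> 0" using le[of 0] isn_0[OF assms] by simp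
  show "inner w x \<le> dual_norm N w * N x"
  proof (cases "x = 0")
    case True then show ?thesis using isn_0[OF assms] by simp
  next
    case False
    hence Np: "N x > 0" using isn_nonneg[OF assms, of x] assms unfolding is_norm_def by force
    have "N ((1 / N x) *\<^sub>R x) = \<bar>1 / N x\<bar> * N x" using assms unfolding is_norm_def by blast
    hence "N ((1 / N x) *\<^sub>R x) = 1" using Np by simp
    hence "inner w ((1 / N x) *\<^sub>R x) \<le> dual_norm N w" by (intro le) simp
    hence "inner w x / N x \<le> dual_norm N w" by simp
    thus ?thesis using Np by (simp add: field_simps)
  qed
qed

theorem theorem4p3:
  fixes \<psi> :: "'z::finite \<Rightarrow> 'h::euclidean_space" and \<phi> :: "'y::finite \<Rightarrow> 'h" and c :: real
    and zsel :: "'h \<Rightarrow> 'z"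
    and V :: "'v::topological_space set" and S :: "'v \<Rightarrow> 'y \<Rightarrow> real"
    and D :: "'h set" and h :: "'h \<Rightarrow> real" and gradh :: "'h \<Rightarrow> 'h" and t :: "'h \<Rightarrow> 'v"
    and N :: "'h \<Rightarrow> real" and \<beta> :: real and \<epsilon> :: real
  assumes "is_argmin_selector \<psi> zsel"
    and "phi_calibrated \<phi> V S D h gradh t"
    and "is_norm N"
    and "\<beta> > 0"
    and "\<forall>u\<in>D. \<forall>w\<in>D. h u \<ge> h w + inner (u - w) (gradh w) + (N (u - w))\<^sup>2 / (2 * \<beta>)"
    and "\<epsilon> \<ge> 0"
  shows "calib_fun \<psi> \<phi> c zsel V S D t \<epsilon> \<ge>
           ereal (\<epsilon>\<^sup>2 / (8 * (MAX z. dual_norm N (\<psi> z))\<^sup>2 * \<beta>))"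
proof -
  define C where "C = (MAX z. dual_norm N (\<psi> z))"
  have Cge: "\<And>z. dual_norm N (\<psi> z) \<le> C" unfolding C_def by simp
  have C0: "C \<ge> 0" using Cge dual_ineq(2)[OF assms(3)] by (meson order_trans)
  have pc: "convex hull (range \<phi>) \<subseteq> D" "bij_betw t D V"
    "\<forall>v\<in>V. \<forall>q\<in>Prob. regret_surr V S v q = bregman h gradh (mean_emb \<phi> q) (inv_into D t v)"
    using assms(2) unfolding phi_calibrated_def by auto
  have main: "\<epsilon>\<^sup>2 / (8 * C\<^sup>2 * \<beta>) \<le> regret_surr V S v q"
    if v: "v \<in> V" and q: "q \<in> Prob" and reg: "regret_loss \<psi> \<phi> c (decode zsel D t v) q \<ge> \<epsilon>" for v q
  proof -
    define u where "u = inv_into D t v"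
    define \<mu> where "\<mu> = mean_emb \<phi> q"
    have uD: "u \<in> D" unfolding u_def using v pc(2)
      by (metis bij_betw_imp_surj_on inv_into_into)
    have q0: "\<And>y. q y \<ge> 0" and q1: "(\<Sum>y\<in>UNIV. q y) = 1" using q unfolding Prob_def by auto
    have "\<mu> \<in> convex hull (range \<phi>)" unfolding \<mu>_def mean_emb_def
      by (rule convex_sum) (auto simp: q0 q1 hull_inc)
    hence \<mu>D: "\<mu> \<in> D" using pc(1) by blast
    have rs: "regret_surr V S v q = bregman h gradh \<mu> u" using pc(3) v q unfolding u_def \<mu>_def by blast
    have rsge: "regret_surr V S v q \<ge> (N (\<mu> - u))\<^sup>2 / (2 * \<beta>)"
      using assms(5) uD \<mu>D unfolding rs bregman_def by force
    have el: "\<And>z. exp_loss \<psi> \<phi> c z q = inner (\<psi> z) \<mu> + c"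
    proof -
      fix z
      have "exp_loss \<psi> \<phi> c z q = (\<Sum>y\<in>UNIV. q y * inner (\<psi> z) (\<phi> y)) + c * (\<Sum>y\<in>UNIV. q y)"
        unfolding exp_loss_def lossL_def by (simp add: algebra_simps sum.distrib sum_distrib_left)
      also have "\<dots> = inner (\<psi> z) \<mu> + c"
        unfolding \<mu>_def mean_emb_def q1 by (simp add: inner_sum_right)
      finally show "exp_loss \<psi> \<phi> c z q = inner (\<psi> z) \<mu> + c" .
    qed
    obtain zs where zs: "(MIN z'. exp_loss \<psi> \<phi> c z' q) = exp_loss \<psi> \<phi> c zs q"
    proof -
      have "Min (range (\<lambda>z'. exp_loss \<psi> \<phi> c z' q)) \<in> range (\<lambda>z'. exp_loss \<psi> \<phi> c z' q)"
        by (rule Min_in) auto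
      then obtain z0 where "Min (range (\<lambda>z'. exp_loss \<psi> \<phi> c z' q)) = exp_loss \<psi> \<phi> c z0 q" by blast
      then show ?thesis using that by blast
    qed
    define z where "z = zsel u"
    have sel: "inner (\<psi> z) u \<le> inner (\<psi> zs) u" using assms(1) unfolding is_argmin_selector_def z_def by blast
    have "\<epsilon> \<le> exp_loss \<psi> \<phi> c z q - exp_loss \<psi> \<phi> c zs q"
      using reg unfolding regret_loss_def decode_def zs z_def u_def by simp
    hence "\<epsilon> \<le> inner (\<psi> z) \<mu> - inner (\<psi> zs) \<mu>" unfolding el by simp
    also have "\<dots> \<le> inner (\<psi> z) (\<mu> - u) + inner (\<psi> zs) (u - \<mu>)"
      using sel by (simp add: inner_diff_right)
    also have "\<dots> \<le> C * N (\<mu> - u) + C * N (\<mu> - u)"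
    proof -
      have "inner (\<psi> z) (\<mu> - u) \<le> dual_norm N (\<psi> z) * N (\<mu> - u)" by (rule dual_ineq(1)[OF assms(3)])
      also have "\<dots> \<le> C * N (\<mu> - u)" by (rule mult_right_mono[OF Cge isn_nonneg[OF assms(3)]])
      finally have 1: "inner (\<psi> z) (\<mu> - u) \<le> C * N (\<mu> - u)" .
      have "inner (\<psi> zs) (u - \<mu>) \<le> dual_norm N (\<psi> zs) * N (u - \<mu>)" by (rule dual_ineq(1)[OF assms(3)])
      also have "\<dots> \<le> C * N (u - \<mu>)" by (rule mult_right_mono[OF Cge isn_nonneg[OF assms(3)]])
      also have "N (u - \<mu>) = N (\<mu> - u)" using isn_minus[OF assms(3), of "\<mu> - u"] by simp
      finally have 2: "inner (\<psi> zs) (u - \<mu>) \<le> C * N (\<mu> - u)" .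
      show ?thesis using 1 2 by simp
    qed
    finally have eps: "\<epsilon> \<le> 2 * C * N (\<mu> - u)" by simp
    define r where "r = N (\<mu> - u)"
    have r0: "r \<ge> 0" unfolding r_def using isn_nonneg[OF assms(3)] .
    show ?thesis
    proof (cases "C = 0")
      case True
      have "0 \<le> r\<^sup>2 / (2 * \<beta>)" using assms(4) by simp
      then show ?thesis using True rsge unfolding r_def by simp
    next
      case False
      hence Cp: "C > 0" using C0 by simp
      have "\<epsilon>\<^sup>2 \<le> (2 * C * r)\<^sup>2" using eps assms(6) unfolding r_def[symmetric]
        by (simp add: power_mono)
      hence "\<epsilon>\<^sup>2 / (8 * C\<^sup>2 * \<beta>) \<le> (2 * C * r)\<^sup>2 / (8 * C\<^sup>2 * \<beta>)"
        using Cp assms(4) by (simp add: divide_right_mono)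
      also have "\<dots> = r\<^sup>2 / (2 * \<beta>)" using Cp assms(4) by (simp add: field_simps power2_eq_square)
      finally show ?thesis using rsge unfolding r_def by simp
    qed
  qed
  show ?thesis unfolding calib_fun_def C_def[symmetric]
    by (rule Inf_greatest) (auto intro: main)
qed

end
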